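(* Let constants $C>0$ and $r>0$ be given. For every pair of positive integers $M,n$, let $\boldsymbol{x}_1,\dots,\boldsymbol{x}_M$ be random points that are continuously distributed in the unit ball $\mathbb{B}_n\subset\mathbb{R}^n$, and assume that their conditional densities satisfy $$\rho_n(\boldsymbol{x}_i \mid \boldsymbol{x}_j=\boldsymbol{y}_j,\ \forall j\neq i)\le \frac{C}{r^n V_n(\mathbb{B}_n)}$$ for every $n$, every index $i\in\{1,\dots,M\}$ and all points $\boldsymbol{y}_1,\dots,\boldsymbol{y}_{i-1},\boldsymbol{y}_{i+1},\dots,\boldsymbol{y}_M\in\mathbb{R}^n$. Then this family of joint distributions has the SmAC property with the same constant $C$, with any $B\in(0,1)$, and with $A=Br$.
   Context: $\mathbb{B}_n$ is the unit ball in $\mathbb{R}^n$ and $V_n$ is $n$-dimensional Lebesgue measure. We consider a family of joint distributions of $\boldsymbol{x}_1,\dots,\boldsymbol{x}_M\in\mathbb{R}^n$, one for each pair of positive integers $(M,n)$. This family has the SmAC (Smeared Absolute Continuity) property if there exist constants $A>0$, $B\in(0,1)$, $C>0$ (independent of $M$ and $n$) such that for every positive integer $n$, every convex set $S\subset\mathbb{R}^n$ with $V_n(S)/V_n(\mathbb{B}_n)\le A^n$, every index $i\in\{1,\dots,M\}$, and all points $\boldsymbol{y}_1,\dots,\boldsymbol{y}_{i-1},\boldsymbol{y}_{i+1},\dots,\boldsymbol{y}_M\in\mathbb{R}^n$, $$\mathbb{P}(\boldsymbol{x}_i\in\mathbb{B}_n\setminus S \mid \boldsymbol{x}_j=\boldsymbol{y}_j,\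 \forall j\neq i)\ge 1-CB^n.$$ *)

theory Defs
  imports "HOL-Analysis.Analysis"
begin

text \<open>A configuration of M points in R^n is an element of real^'n^'m:
  the i-th point is x$i. Dimension n = CARD('n), number of points M = CARD('m).\<close>

definition upd_pt :: "real^'n^'m \<Rightarrow> 'm \<Rightarrow> real^'n \<Rightarrow> real^'n^'m" where
  "upd_pt y i z = (\<chi> j. if j = i then z else y $ j)"

definition joint_density_in_ball :: "(real^'n^'m \<Rightarrow> real) \<Rightarrow> bool" where
  "joint_density_in_ball f \<longleftrightarrow>
     f \<in> borel_measurable lborel \<and> (\<forall>x. 0 \<le> f x) \<and>
     (\<integral>\<^sup>+ x. ennreal (f x) \<partial>lborel) = 1 \<and>
     (\<forall>x. (\<exists>i. x $ i \<notin> ball 0 1) \<longrightarrow> f x = 0)"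

definition cond_norm :: "(real^'n^'m \<Rightarrow> real) \<Rightarrow> 'm \<Rightarrow> real^'n^'m \<Rightarrow> ennreal" where
  "cond_norm f i y = (\<integral>\<^sup>+ z. ennreal (f (upd_pt y i z)) \<partial>lebesgue)"

definition cond_defined :: "(real^'n^'m \<Rightarrow> real) \<Rightarrow> 'm \<Rightarrow> real^'n^'m \<Rightarrow> bool" where
  "cond_defined f i y \<longleftrightarrow> 0 < cond_norm f i y \<and> cond_norm f i y < \<infinity>"

definition cond_density :: "(real^'n^'m \<Rightarrow> real) \<Rightarrow> 'm \<Rightarrow> real^'n^'m \<Rightarrow> real^'n \<Rightarrow> real" where
  "cond_density f i y z = f (upd_pt y i z) / enn2real (cond_norm f i y)"

definition cond_prob :: "(real^'n^'m \<Rightarrow> real) \<Rightarrow> 'm \<Rightarrow> real^'n^'m \<Rightarrow> (real^'n) set \<Rightarrow> real" where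
  "cond_prob f i y T =
     enn2real (\<integral>\<^sup>+ z\<in>T. ennreal (f (upd_pt y i z)) \<partial>lebesgue) / enn2real (cond_norm f i y)"

definition smac_with :: "real \<Rightarrow> real \<Rightarrow> real \<Rightarrow> (real^'n^'m \<Rightarrow> real) \<Rightarrow> bool" where
  "smac_with A B C f \<longleftrightarrow>
     0 < A \<and> 0 < B \<and> B < 1 \<and> 0 < C \<and>
     (\<forall>S :: (real^'n) set. \<forall>i y.
        convex S \<and>
        emeasure lebesgue S \<le> ennreal (A ^ CARD('n)) * emeasure lebesgue (ball (0::real^'n) 1) \<and>
        cond_defined f i y \<longrightarrow>
        cond_prob f i y (ball 0 1 - S) \<ge> 1 - C * B ^ CARD('n))"

end

theory Submission
  imports Defs
begin

lemma convex_sets_lebesgue: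
  fixes S :: "'a::euclidean_space set"
  assumes "convex S"
  shows "S \<in> sets lebesgue"
proof -
  have "S = (\<Union>k::nat. S \<inter> ball 0 (real k))"
    using reals_Archimedean2 by (auto simp: dist_norm)
  moreover have "S \<inter> ball 0 (real k) \<in> sets lebesgue" for k
    using measurable_convex[of "S \<inter> ball 0 (real k)"] assms
    by (simp add: convex_Int fmeasurableD bounded_Int)
  moreover have "(\<Union>k::nat. S \<inter> ball 0 (real k)) \<in> sets lebesgue"
    using calculation(2) by (intro sets.countable_UN') auto
  ultimately show ?thesis by simp
qed

theorem proposition1:
  fixes f :: "real^'n^'m \<Rightarrow> real" and C r B :: real
  assumes "0 < C" and "0 < r" and "0 < B" and "B < 1"
    and "joint_density_in_ball f"
    and "\<forall>i y z. cond_defined f i y \<longrightarrow>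
           cond_density f i y z \<le> C / (r ^ CARD('n) * measure lebesgue (ball (0::real^'n) 1))"
  shows "smac_with (B * r) B C f"
proof -
  define V where "V = measure lebesgue (ball (0::real^'n) 1)"
  have Vpos: "0 < V" unfolding V_def
    using content_ball_pos[of 1 "0::real^'n"] by (simp add: measure_completion)
  have emV: "emeasure lebesgue (ball (0::real^'n) 1) = ennreal V"
    unfolding V_def by (rule emeasure_eq_measure2) simp
  define D where "D = C / (r ^ CARD('n) * V)"
  have fJ: "f \<in> borel_measurable lborel" "\<And>x. 0 \<le> f x"
     "\<And>x. (\<exists>i. x $ i \<notin> ball 0 1) \<Longrightarrow> f x = 0"
    using assms(5) unfolding joint_density_in_ball_def by auto
  show ?thesis unfolding smac_with_def
  proof (intro conjI allI impI)
    show "0 < B * r" "0 < B" "B < 1" "0 < C" using assms by auto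
    fix S :: "(real^'n) set" and i y
    assume H: "convex S \<and>
        emeasure lebesgue S \<le> ennreal ((B * r) ^ CARD('n)) * emeasure lebesgue (ball (0::real^'n) 1) \<and>
        cond_defined f i y"
    define g where "g z = f (upd_pt y i z)" for z
    define N where "N = cond_norm f i y"
    have N: "0 < N" "N < \<infinity>" using H unfolding cond_defined_def N_def by auto
    define Nr where "Nr = enn2real N"
    have Nr_pos: "0 < Nr" and N_eq: "N = ennreal Nr"
      using N unfolding Nr_def by (auto simp: enn2real_positive_iff)
    have N_int: "N = (\<integral>\<^sup>+ z. ennreal (g z) \<partial>lebesgue)"
      unfolding N_def cond_norm_def g_def by simp
    have g_nn: "\<And>z. 0 \<le> g z" unfolding g_def using fJ by auto
    have g_meas: "g \<in> borel_measurable lebesgue"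
    proof -
      have c: "continuous_on UNIV (upd_pt y i)"
        unfolding upd_pt_def by (intro continuous_on_vec_lambda, case_tac "j = i") (simp_all add: continuous_on_const continuous_on_id)
      have "(\<lambda>z. f (upd_pt y i z)) \<in> borel_measurable borel"
        using fJ(1) borel_measurable_continuous_onI[OF c]
        by (simp add: measurable_compose_rev)
      then show ?thesis unfolding g_def
        by (intro measurable_completion) simp
    qed
    have g_zero: "\<And>z. z \<notin> ball 0 1 \<Longrightarrow> g z = 0"
      unfolding g_def by (rule fJ(3)) (auto simp: upd_pt_def)
    have g_le: "\<And>z. g z \<le> D * Nr"
    proof -
      fix z
      have "g z / Nr \<le> D"
        using assms(6) H unfolding cond_density_def D_def V_def g_def Nr_def N_def by auto
      then show "g z \<le> D * Nr" using Nr_pos by (simp add: divide_le_eq mult.commute)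
    qed
    have Smeas: "S \<in> sets lebesgue" using H convex_sets_lebesgue by blast
    have bmeas: "ball (0::real^'n) 1 \<in> sets lebesgue" by simp
    define X where "X = (\<integral>\<^sup>+ z\<in>ball 0 1 - S. ennreal (g z) \<partial>lebesgue)"
    define Y where "Y = (\<integral>\<^sup>+ z\<in>ball 0 1 \<inter> S. ennreal (g z) \<partial>lebesgue)"
    have "N = X + Y"
    proof -
      have "N = (\<integral>\<^sup>+ z. (ennreal (g z) * indicator (ball 0 1 - S) z
                  + ennreal (g z) * indicator (ball 0 1 \<inter> S) z) \<partial>lebesgue)"
        unfolding N_int
        by (intro nn_integral_cong) (auto simp: indicator_def g_zero)
      also have "\<dots> = X + Y" unfolding X_def Y_def
        proof (rule nn_integral_add)
        have ge: "(\<lambda>x. ennreal (g x)) \<in> borel_measurable lebesgue" using g_meas by simp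
        have "ball 0 1 - S \<in> sets lebesgue" "ball 0 1 \<inter> S \<in> sets lebesgue"
          using Smeas bmeas by auto
        then show "(\<lambda>x. ennreal (g x) * indicator (ball 0 1 - S) x) \<in> borel_measurable lebesgue"
            "(\<lambda>x. ennreal (g x) * indicator (ball 0 1 \<inter> S) x) \<in> borel_measurable lebesgue"
          using ge by (auto intro!: borel_measurable_times_ennreal borel_measurable_indicator)
      qed
      finally show ?thesis .
    qed
    have "Y \<le> (\<integral>\<^sup>+ z. ennreal (D * Nr) * indicator S z \<partial>lebesgue)"
      unfolding Y_def
      by (intro nn_integral_mono) (auto simp: indicator_def g_le ennreal_leI)
    also have "\<dots> = ennreal (D * Nr) * emeasure lebesgue S"
      using Smeas by (rule nn_integral_cmult_indicator)
    also have "\<dots> \<le> ennreal (D * Nr) * (ennreal ((B * r) ^ CARD('n)) * ennreal V)"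
      using H emV by (intro mult_left_mono) auto
    also have "\<dots> = ennreal (C * B ^ CARD('n) * Nr)"
    proof -
      have "D * Nr * ((B * r) ^ CARD('n) * V) = C * B ^ CARD('n) * Nr"
        using Vpos assms(2) unfolding D_def by (simp add: power_mult_distrib field_simps)
      moreover have "0 \<le> D" unfolding D_def using assms Vpos by auto
      ultimately show ?thesis using Nr_pos Vpos assms
        by (simp add: ennreal_mult[symmetric])
    qed
    finally have Yle: "Y \<le> ennreal (C * B ^ CARD('n) * Nr)" .
    have Yfin: "Y < \<infinity>" using Yle by (simp add: le_less_trans)
    have Xfin: "X < \<infinity>" using N \<open>N = X + Y\<close> by auto
    have sum: "enn2real X + enn2real Y = Nr"
      using \<open>N = X + Y\<close> Xfin Yfin unfolding Nr_def by (simp add: enn2real_plus)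
    have "enn2real Y \<le> C * B ^ CARD('n) * Nr"
      using Yle Nr_pos assms by (simp add: enn2real_leI)
    then have "enn2real X \<ge> (1 - C * B ^ CARD('n)) * Nr" using sum by (simp add: algebra_simps)
    then have "enn2real X / Nr \<ge> 1 - C * B ^ CARD('n)"
      using Nr_pos by (simp add: le_divide_eq)
    then show "cond_prob f i y (ball 0 1 - S) \<ge> 1 - C * B ^ CARD('n)"
      unfolding cond_prob_def X_def g_def Nr_def N_def by simp
  qed
qed

end
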